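(* Every $C^k$ split map $\Phi$ of the split annulus $\mathbf A$ to itself is of the form $\Phi(x,y)=(\varphi(x),\varphi(y))$, where $\varphi$ is a $C^k$ diffeomorphism of $\mathbf{RP}^1$ (a homeomorphism if $k=0$). Moreover, $\Phi$ is an isometry of $(\mathbf A,g_0)$ if and only if $\varphi$ is projective.
   Context: $\mathbf A=(\mathbf{RP}^1\times\mathbf{RP}^1)\setminus\Delta$ ($\Delta$ the diagonal) with split structure $(\mathcal L_1,\mathcal L_2)$, where $\mathcal L_i$ is the foliation by fibers of the projection to the $i$-th factor. A split map of $\mathbf A$ is a homeomorphism of $\mathbf A$ mapping each leaf of $\mathcal L_1$ onto a leaf of $\mathcal L_1$ and each leaf of $\mathcal L_2$ onto a leaf of $\mathcal L_2$; a $C^k$ split map is one that is moreover a $C^k$ diffeomorphism. $g_0$ is the de Sitter metric, $g_0=\frac{2\,\mathrm dx\,\mathrm dy}{(x-y)^2}$ in any affine chart. *)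

theory Defs
  imports "HOL-Analysis.Analysis"
begin

primrec Ck :: "nat \<Rightarrow> ('a::real_normed_vector \<Rightarrow> 'b::real_normed_vector) \<Rightarrow> 'a set \<Rightarrow> bool" where
  "Ck 0 f S = continuous_on S f"
| "Ck (Suc n) f S = ((\<forall>x\<in>S. f differentiable (at x)) \<and>
                      (\<forall>v. Ck n (\<lambda>x. frechet_derivative f (at x) v) S))"

text \<open>A point of RP^1 is modelled as an element of real option: Some x is the line [x:1],
  None is the point at infinity [1:0].\<close>
type_synonym rp1 = "real option"

text \<open>All three coordinates are affine coordinates (they differ from x by a projective
  transformation).\<close>
definition chart_dom :: "nat \<Rightarrow> rp1 set" where
  "chart_dom i = (if i = 0 then range Some
                  else if i = 1 then {p. p \<noteq> Some 0}
                  else {p. p \<noteq> Some 1})"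

definition chart :: "nat \<Rightarrow> rp1 \<Rightarrow> real" where
  "chart i p = (if i = 0 then (case p of Some x \<Rightarrow> x | None \<Rightarrow> 0)
                else if i = 1 then (case p of Some x \<Rightarrow> - 1 / x | None \<Rightarrow> 0)
                else (case p of Some x \<Rightarrow> 1 / (1 - x) | None \<Rightarrow> 0))"

definition chart_inv :: "nat \<Rightarrow> real \<Rightarrow> rp1" where
  "chart_inv i t = (if i = 0 then Some t
                    else if i = 1 then (if t = 0 then None else Some (- 1 / t))
                    else (if t = 0 then None else Some (1 - 1 / t)))"

definition charts :: "nat set" where "charts = {0, 1, 2}"

definition Ck_map_rp1 :: "nat \<Rightarrow> (rp1 \<Rightarrow> rp1) \<Rightarrow> bool" where
  "Ck_map_rp1 k f \<longleftrightarrow>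
     (\<forall>i\<in>charts. \<forall>j\<in>charts.
        open {t. f (chart_inv i t) \<in> chart_dom j} \<and>
        Ck k (\<lambda>t. chart j (f (chart_inv i t))) {t. f (chart_inv i t) \<in> chart_dom j})"

definition Ck_diffeo_rp1 :: "nat \<Rightarrow> (rp1 \<Rightarrow> rp1) \<Rightarrow> bool" where
  "Ck_diffeo_rp1 k f \<longleftrightarrow> bij f \<and> Ck_map_rp1 k f \<and> Ck_map_rp1 k (inv f)"

text \<open>Projective transformations of RP^1 (elements of PGL(2,R)), written in the affine
  coordinate: [x:1] |-> [ax+b : cx+d], [1:0] |-> [a:c].\<close>
definition mobius :: "real \<Rightarrow> real \<Rightarrow> real \<Rightarrow> real \<Rightarrow> rp1 \<Rightarrow> rp1" where
  "mobius a b c d p = (case p of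
      Some x \<Rightarrow> (if c * x + d = 0 then None else Some ((a * x + b) / (c * x + d)))
    | None \<Rightarrow> (if c = 0 then None else Some (a / c)))"

definition projective :: "(rp1 \<Rightarrow> rp1) \<Rightarrow> bool" where
  "projective f \<longleftrightarrow> (\<exists>a b c d. a * d - b * c \<noteq> 0 \<and> f = mobius a b c d)"

definition annulus :: "(rp1 \<times> rp1) set" where
  "annulus = {(p, q). p \<noteq> q}"

definition chartA_inv :: "nat \<times> nat \<Rightarrow> real \<times> real \<Rightarrow> rp1 \<times> rp1" where
  "chartA_inv ij st = (chart_inv (fst ij) (fst st), chart_inv (snd ij) (snd st))"

definition chartA :: "nat \<times> nat \<Rightarrow> rp1 \<times> rp1 \<Rightarrow> real \<times> real" where
  "chartA ij pq = (chart (fst ij) (fst pq), chart (snd ij) (snd pq))"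

definition chartA_dom :: "nat \<times> nat \<Rightarrow> (rp1 \<times> rp1) set" where
  "chartA_dom ij = annulus \<inter> (chart_dom (fst ij) \<times> chart_dom (snd ij))"

definition locdom :: "(rp1 \<times> rp1 \<Rightarrow> rp1 \<times> rp1) \<Rightarrow> nat \<times> nat \<Rightarrow> nat \<times> nat \<Rightarrow> (real \<times> real) set" where
  "locdom F ij ij' = {st. chartA_inv ij st \<in> annulus \<and> F (chartA_inv ij st) \<in> chartA_dom ij'}"

definition locexp :: "(rp1 \<times> rp1 \<Rightarrow> rp1 \<times> rp1) \<Rightarrow> nat \<times> nat \<Rightarrow> nat \<times> nat \<Rightarrow> real \<times> real \<Rightarrow> real \<times> real" where
  "locexp F ij ij' st = chartA ij' (F (chartA_inv ij st))"

definition Ck_map_A :: "nat \<Rightarrow> (rp1 \<times> rp1 \<Rightarrow> rp1 \<times> rp1) \<Rightarrow> bool" where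
  "Ck_map_A k F \<longleftrightarrow> F ` annulus \<subseteq> annulus \<and>
     (\<forall>ij\<in>charts \<times> charts. \<forall>ij'\<in>charts \<times> charts.
        open (locdom F ij ij') \<and> Ck k (locexp F ij ij') (locdom F ij ij'))"

definition Ck_diffeo_A :: "nat \<Rightarrow> (rp1 \<times> rp1 \<Rightarrow> rp1 \<times> rp1) \<Rightarrow> bool" where
  "Ck_diffeo_A k F \<longleftrightarrow> bij_betw F annulus annulus \<and> Ck_map_A k F \<and>
                        Ck_map_A k (inv_into annulus F)"

definition leaf1 :: "rp1 \<Rightarrow> (rp1 \<times> rp1) set" where
  "leaf1 p = {pq \<in> annulus. fst pq = p}"

definition leaf2 :: "rp1 \<Rightarrow> (rp1 \<times> rp1) set" where
  "leaf2 q = {pq \<in> annulus. snd pq = q}"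

definition split_map :: "(rp1 \<times> rp1 \<Rightarrow> rp1 \<times> rp1) \<Rightarrow> bool" where
  "split_map F \<longleftrightarrow> Ck_diffeo_A 0 F \<and>
     (\<forall>p. \<exists>p'. F ` leaf1 p = leaf1 p') \<and> (\<forall>q. \<exists>q'. F ` leaf2 q = leaf2 q')"

definition Ck_split_map :: "nat \<Rightarrow> (rp1 \<times> rp1 \<Rightarrow> rp1 \<times> rp1) \<Rightarrow> bool" where
  "Ck_split_map k F \<longleftrightarrow> split_map F \<and> Ck_diffeo_A k F"

text \<open>In the coordinates (s,t) of the product chart (i,i) (same affine chart on both
  factors), g0 at (s,t) applied to tangent vectors v, w is (v1 w2 + v2 w1)/(s - t)^2.\<close>
definition g0 :: "real \<times> real \<Rightarrow> real \<times> real \<Rightarrow> real \<times> real \<Rightarrow> real" where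
  "g0 st v w = (fst v * snd w + snd v * fst w) / (fst st - snd st)^2"

definition isometry_A :: "(rp1 \<times> rp1 \<Rightarrow> rp1 \<times> rp1) \<Rightarrow> bool" where
  "isometry_A F \<longleftrightarrow> Ck_diffeo_A 1 F \<and>
     (\<forall>i\<in>charts. \<forall>j\<in>charts. \<forall>st\<in>locdom F (i, i) (j, j). \<forall>v w.
        g0 (locexp F (i, i) (j, j) st)
           (frechet_derivative (locexp F (i, i) (j, j)) (at st) v)
           (frechet_derivative (locexp F (i, i) (j, j)) (at st) w)
        = g0 st v w)"

end

theory Submission
  imports Defs "HOL-Analysis.Analysis"
begin

lemma Ck_mono: "Ck k f S \<Longrightarrow> T \<subseteq> S \<Longrightarrow> Ck k f T"
proof (induction k arbitrary: f)
  case 0 then show ?case by (auto intro: continuous_on_subset)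
next
  case (Suc n) then show ?case by auto
qed

lemma Ck_cong:
  assumes "open S" "\<And>x. x \<in> S \<Longrightarrow> f x = g x" "Ck k f S"
  shows "Ck k g S"
  using assms
proof (induction k arbitrary: f g)
  case 0 then show ?case by (auto intro: continuous_on_cong[THEN iffD1])
next
  case (Suc n)
  have d: "g differentiable (at x)" if "x \<in> S" for x
  proof -
    from Suc.prems that have "f differentiable (at x)" by auto
    then obtain D where "(f has_derivative D) (at x)" by (auto simp: differentiable_def)
    then have "(g has_derivative D) (at x)"
      using has_derivative_transform_within_open[of f D x UNIV S g] Suc.prems that by auto
    then show ?thesis by (auto simp: differentiable_def)
  qed
  have fd: "frechet_derivative g (at x) = frechet_derivative f (at x)" if "x \<in> S" for x
  proof -
    from Suc.prems that have "f differentiable (at x)" by auto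
    then obtain D where D: "(f has_derivative D) (at x)" by (auto simp: differentiable_def)
    then have "(g has_derivative D) (at x)"
      using has_derivative_transform_within_open[of f D x UNIV S g] Suc.prems that by auto
    then show ?thesis using D frechet_derivative_at by metis
  qed
  show ?case
    using Suc.prems d fd Suc.IH[of "\<lambda>x. frechet_derivative f (at x) v" "\<lambda>x. frechet_derivative g (at x) v" for v]
    by auto
qed

lemma Ck_local:
  assumes "\<And>x. x \<in> S \<Longrightarrow> \<exists>T. open T \<and> x \<in> T \<and> T \<subseteq> S \<and> Ck k f T"
  shows "Ck k f S"
  using assms
proof (induction k arbitrary: f)
  case 0
  show ?case unfolding Ck.simps continuous_on_eq_continuous_within
  proof
    fix x assume "x \<in> S"
    then obtain T where T: "open T" "x \<in> T" "T \<subseteq> S" "continuous_on T f" using 0 by force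
    then have "isCont f x" using continuous_on_eq_continuous_at by blast
    then show "continuous (at x within S) f" using continuous_at_imp_continuous_at_within by blast
  qed
next
  case (Suc n)
  show ?case
  proof (simp, intro conjI ballI allI)
    fix x assume "x \<in> S"
    then show "f differentiable (at x)" using Suc.prems by force
  next
    fix v
    show "Ck n (\<lambda>x. frechet_derivative f (at x) v) S"
      apply (rule Suc.IH)
      using Suc.prems by (metis Ck.simps(2))
  qed
qed

lemma Ck_imp_cont: "Ck k f S \<Longrightarrow> continuous_on S f"
proof (induction k arbitrary: f)
  case 0 then show ?case by simp
next
  case (Suc n)
  then show ?case
    by (auto intro!: continuous_at_imp_continuous_on differentiable_imp_continuous_within)
qed

lemma Ck_Suc_imp_1: "Ck (Suc n) f S \<Longrightarrow> Ck 1 f S"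
  by (simp) (meson Ck_imp_cont)

lemma open_affine_vimage:
  fixes A :: "'d::real_normed_vector \<Rightarrow> 'a::real_normed_vector"
  assumes "open S" "bounded_linear A"
  shows "open {t. A t + b \<in> S}"
proof -
  have "continuous_on UNIV (\<lambda>t. A t + b)"
    by (intro continuous_intros linear_continuous_on assms)
  then have "open ((\<lambda>t. A t + b) -` S)" using assms(1) open_vimage by blast
  then show ?thesis by (simp add: vimage_def)
qed

lemma Ck_comp_affine:
  fixes g :: "'a::real_normed_vector \<Rightarrow> 'b::real_normed_vector"
    and L :: "'b \<Rightarrow> 'c::real_normed_vector" and A :: "'d::real_normed_vector \<Rightarrow> 'a"
  assumes "open S" "Ck k g S" "bounded_linear L" "bounded_linear A"
  shows "Ck k (\<lambda>t. L (g (A t + b))) {t. A t + b \<in> S}"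
  using assms(2)
proof (induction k arbitrary: g)
  case 0
  have cA: "continuous_on {t. A t + b \<in> S} (\<lambda>t. A t + b)"
    by (intro continuous_intros linear_continuous_on assms)
  have "continuous_on {t. A t + b \<in> S} (g \<circ> (\<lambda>t. A t + b))"
    apply (rule continuous_on_compose[OF cA])
    using 0 by (auto intro: continuous_on_subset)
  then have "continuous_on {t. A t + b \<in> S} (L \<circ> (g \<circ> (\<lambda>t. A t + b)))"
    by (rule continuous_on_compose, simp, intro linear_continuous_on assms)
  then show ?case by (simp add: o_def)
next
  case (Suc n)
  have hd: "((\<lambda>t. L (g (A t + b))) has_derivative (\<lambda>v. L (frechet_derivative g (at (A t + b)) (A v)))) (at t)"
    if "A t + b \<in> S" for t
  proof -
    have dA: "((\<lambda>t. A t + b) has_derivative A) (at t)"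
      using assms(4) by (auto intro!: derivative_eq_intros bounded_linear_imp_has_derivative)
    have "(g has_derivative frechet_derivative g (at (A t + b))) (at (A t + b))"
      using Suc.prems that frechet_derivative_works by auto
    then have "((\<lambda>t. g (A t + b)) has_derivative (\<lambda>v. frechet_derivative g (at (A t + b)) (A v))) (at t)"
      using has_derivative_compose[OF dA, of g] by blast
    then show ?thesis
      using bounded_linear.has_derivative[OF assms(3)] by blast
  qed
  show ?case
  proof (simp only: Ck.simps, intro conjI ballI allI)
    fix t assume "t \<in> {t. A t + b \<in> S}"
    then show "(\<lambda>t. L (g (A t + b))) differentiable (at t)" using hd by (auto simp: differentiable_def)
  next
    fix v
    have "Ck n (\<lambda>t. L (frechet_derivative g (at (A t + b)) (A v))) {t. A t + b \<in> S}"
      using Suc.IH[of "\<lambda>x. frechet_derivative g (at x) (A v)"] Suc.prems by auto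
    then show "Ck n (\<lambda>x. frechet_derivative (\<lambda>t. L (g (A t + b))) (at x) v) {t. A t + b \<in> S}"
      apply (rule Ck_cong[rotated 2])
      using open_affine_vimage[OF assms(1) assms(4)] apply simp
    proof -
      fix x assume "x \<in> {t. A t + b \<in> S}"
      then have "(\<lambda>v. L (frechet_derivative g (at (A x + b)) (A v))) = frechet_derivative (\<lambda>t. L (g (A t + b))) (at x)"
        using hd frechet_derivative_at by blast
      then show "L (frechet_derivative g (at (A x + b)) (A v)) = frechet_derivative (\<lambda>t. L (g (A t + b))) (at x) v"
        by metis
    qed
  qed
qed

definition other :: "rp1 \<Rightarrow> rp1" where "other p = (if p = None then Some 0 else None)"

lemma other_ne: "other p \<noteq> p" by (cases p) (auto simp: other_def)

lemma leaf1_eq: "leaf1 p = leaf1 p' \<Longrightarrow> p = p'"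
proof -
  assume "leaf1 p = leaf1 p'"
  moreover have "(p, other p) \<in> leaf1 p" using other_ne[of p] by (simp add: leaf1_def annulus_def)
  ultimately show "p = p'" by (simp add: leaf1_def)
qed

lemma leaf2_eq: "leaf2 p = leaf2 p' \<Longrightarrow> p = p'"
proof -
  assume "leaf2 p = leaf2 p'"
  moreover have "(other p, p) \<in> leaf2 p" using other_ne by (simp add: leaf2_def annulus_def)
  ultimately show "p = p'" by (simp add: leaf2_def)
qed

lemma split_structure:
  assumes "split_map F"
  shows "\<exists>\<phi>. bij \<phi> \<and> (\<forall>(x,y)\<in>annulus. F (x,y) = (\<phi> x, \<phi> y))"
proof -
  have bij: "bij_betw F annulus annulus" using assms by (simp add: split_map_def Ck_diffeo_A_def)
  from assms obtain \<phi>1 where h1: "\<And>p. F ` leaf1 p = leaf1 (\<phi>1 p)"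
    unfolding split_map_def by metis
  from assms obtain \<phi>2 where h2: "\<And>p. F ` leaf2 p = leaf2 (\<phi>2 p)"
    unfolding split_map_def by metis
  have F1: "fst (F (x,y)) = \<phi>1 x" if "(x,y) \<in> annulus" for x y
  proof -
    have "(x,y) \<in> leaf1 x" using that by (simp add: leaf1_def)
    then have "F (x,y) \<in> leaf1 (\<phi>1 x)" using h1 by blast
    then show ?thesis by (simp add: leaf1_def)
  qed
  have F2: "snd (F (x,y)) = \<phi>2 y" if "(x,y) \<in> annulus" for x y
  proof -
    have "(x,y) \<in> leaf2 y" using that by (simp add: leaf2_def)
    then have "F (x,y) \<in> leaf2 (\<phi>2 y)" using h2 by blast
    then show ?thesis by (simp add: leaf2_def)
  qed
  have inj: "inj_on F annulus" using bij bij_betw_def by blast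
  have inj1: "inj \<phi>1"
  proof (rule injI)
    fix x x' assume "\<phi>1 x = \<phi>1 x'"
    then have "F ` leaf1 x = F ` leaf1 x'" using h1 by simp
    moreover have "leaf1 x \<subseteq> annulus" "leaf1 x' \<subseteq> annulus" by (auto simp: leaf1_def)
    ultimately have "leaf1 x = leaf1 x'" using inj_on_image_eq_iff[OF inj] by blast
    then show "x = x'" using leaf1_eq by blast
  qed
  have surj1: "surj \<phi>1"
  proof -
    have "p' \<in> range \<phi>1" for p'
    proof -
      have "(p', other p') \<in> annulus" using other_ne[of p'] by (simp add: annulus_def)
      then obtain xy where "xy \<in> annulus" "F xy = (p', other p')" using bij
        by (metis bij_betw_imp_surj_on imageE)
      then show ?thesis using F1[of "fst xy" "snd xy"] by auto
    qed
    then show ?thesis by blast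
  qed
  have surj2: "surj \<phi>2"
  proof -
    have "p' \<in> range \<phi>2" for p'
    proof -
      have "(other p', p') \<in> annulus" using other_ne by (simp add: annulus_def)
      then obtain xy where "xy \<in> annulus" "F xy = (other p', p')" using bij
        by (metis bij_betw_imp_surj_on imageE)
      then show ?thesis using F2[of "fst xy" "snd xy"] by auto
    qed
    then show ?thesis by blast
  qed
  have eq: "\<phi>2 x = \<phi>1 x" for x
  proof (rule ccontr)
    assume ne: "\<phi>2 x \<noteq> \<phi>1 x"
    obtain z where z: "\<phi>1 z = \<phi>2 x" using surj1 by (metis surjD)
    then have "z \<noteq> x" using ne by auto
    then have za: "(z, x) \<in> annulus" by (simp add: annulus_def)
    then have "F (z,x) \<in> annulus" using bij bij_betw_imp_surj_on by blast
    moreover have "F (z,x) = (\<phi>1 z, \<phi>2 x)" using F1[OF za] F2[OF za] by (metis prod.collapse)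
    ultimately show False using z by (simp add: annulus_def)
  qed
  show ?thesis
  proof (intro exI conjI)
    show "bij \<phi>1" using inj1 surj1 bij_def by blast
    show "\<forall>(x,y)\<in>annulus. F (x,y) = (\<phi>1 x, \<phi>1 y)"
    proof (intro ballI, clarify)
      fix x y assume a: "(x, y) \<in> annulus"
      show "F (x,y) = (\<phi>1 x, \<phi>1 y)" using F1[OF a] F2[OF a] eq[of y] by (metis prod.collapse)
    qed
  qed
qed

lemma chart_inv_inj: "i \<in> charts \<Longrightarrow> chart_inv i t = chart_inv i s \<Longrightarrow> t = s"
  by (auto simp: charts_def chart_inv_def split: if_splits)

lemma in_some_chart: "\<exists>j\<in>charts. p \<in> chart_dom j"
proof (cases p)
  case None then show ?thesis by (intro bexI[of _ 1]) (auto simp: charts_def chart_dom_def)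
next
  case (Some x) then show ?thesis by (intro bexI[of _ 0]) (auto simp: charts_def chart_dom_def)
qed

lemma bl_inl: "bounded_linear (\<lambda>t::real. (t, 0::real))"
  by (intro bounded_linear_Pair bounded_linear_ident bounded_linear_zero)

lemma Ck_map_A_imp_rp1:
  assumes F: "Ck_map_A k F" and g: "\<forall>(x,y)\<in>annulus. F (x,y) = (g x, g y)"
  shows "Ck_map_rp1 k g"
  unfolding Ck_map_rp1_def
proof (intro ballI)
  fix i j assume i: "i \<in> charts" and j: "j \<in> charts"
  define Od where "Od = {t. g (chart_inv i t) \<in> chart_dom j}"
  define h where "h = (\<lambda>t. chart j (g (chart_inv i t)))"
  have loc: "\<exists>W. open W \<and> t0 \<in> W \<and> W \<subseteq> Od \<and> Ck k h W" if t0: "t0 \<in> Od" for t0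
  proof -
    define s0 where "s0 = t0 + 1"
    obtain j' where j': "j' \<in> charts" "g (chart_inv i s0) \<in> chart_dom j'" using in_some_chart by blast
    define D where "D = locdom F (i,i) (j,j')"
    have oD: "open D" and cD: "Ck k (locexp F (i,i) (j,j')) D"
      using F i j j' unfolding Ck_map_A_def D_def by auto
    define W where "W = {t. (\<lambda>t. (t, 0::real)) t + (0, s0) \<in> D}"
    have oW: "open W" unfolding W_def by (rule open_affine_vimage[OF oD bl_inl])
    have cW: "Ck k (\<lambda>t. fst (locexp F (i,i) (j,j') ((\<lambda>t. (t, 0::real)) t + (0, s0)))) W"
      unfolding W_def by (rule Ck_comp_affine[OF oD cD bounded_linear_fst bl_inl])
    have Wc: "W = {t. (t, s0) \<in> D}" by (simp add: W_def)
    have key: "g (chart_inv i t) \<in> chart_dom j \<and> fst (locexp F (i,i) (j,j') (t, s0)) = h t" if "t \<in> W" for t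
    proof -
      from that have tD: "(t,s0) \<in> D" by (simp add: Wc)
      then have ann: "(chart_inv i t, chart_inv i s0) \<in> annulus" and
        dom: "F (chart_inv i t, chart_inv i s0) \<in> chartA_dom (j,j')"
        by (auto simp: D_def locdom_def chartA_inv_def)
      have "F (chart_inv i t, chart_inv i s0) = (g (chart_inv i t), g (chart_inv i s0))"
        using g ann by auto
      then show ?thesis using dom by (simp add: chartA_dom_def locexp_def chartA_inv_def chartA_def h_def)
    qed
    have "t0 \<in> W"
    proof -
      have ne: "chart_inv i t0 \<noteq> chart_inv i s0" using chart_inv_inj[OF i] s0_def by force
      then have ann: "(chart_inv i t0, chart_inv i s0) \<in> annulus" by (simp add: annulus_def)
      then have "F (chart_inv i t0, chart_inv i s0) \<in> annulus" using F unfolding Ck_map_A_def by blast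
      moreover have "F (chart_inv i t0, chart_inv i s0) = (g (chart_inv i t0), g (chart_inv i s0))"
        using g ann by auto
      ultimately show ?thesis using ann t0 j'
        by (simp add: Wc D_def locdom_def chartA_inv_def chartA_dom_def Od_def)
    qed
    moreover have "W \<subseteq> Od" using key by (auto simp: Od_def)
    moreover have "Ck k h W"
      apply (rule Ck_cong[OF oW _ cW])
      using key by simp
    ultimately show ?thesis using oW by blast
  qed
  have "open Od" by (rule open_subopen[THEN iffD2]) (use loc in blast)
  moreover have "Ck k h Od" by (rule Ck_local) (use loc in blast)
  ultimately show "open {t. g (chart_inv i t) \<in> chart_dom j} \<and>
          Ck k (\<lambda>t. chart j (g (chart_inv i t))) {t. g (chart_inv i t) \<in> chart_dom j}"
    by (simp add: Od_def h_def)
qed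

lemma mobius_Some: "mobius a b c d (Some x) = (if c * x + d = 0 then None else Some ((a * x + b) / (c * x + d)))"
  by (simp add: mobius_def)

lemma mobius_None: "mobius a b c d None = (if c = 0 then None else Some (a / c))"
  by (simp add: mobius_def)

lemma mobius_comp:
  fixes a b c d a' b' c' d' :: real
  assumes "a * d - b * c \<noteq> 0" "a' * d' - b' * c' \<noteq> 0"
  shows "mobius a b c d (mobius a' b' c' d' p) =
         mobius (a*a'+b*c') (a*b'+b*d') (c*a'+d*c') (c*b'+d*d') p"
proof (cases p)
  case None
  show ?thesis
  proof (cases "c' = 0")
    case True
    then have "a' \<noteq> 0" using assms(2) by auto
    then show ?thesis using None True by (simp add: mobius_def)
  next
    case False
    have e1: "(c * a' + d * c' = 0) = (c * (a' / c') + d = 0)" using False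
      by (simp add: field_simps)
    have q1: "a * (a' / c') + b = (a*a'+b*c')/c'" "c * (a' / c') + d = (c*a'+d*c')/c'"
      using False by (simp_all add: field_simps)
    have q: "(a * (a' / c') + b) / (c * (a' / c') + d) = (a*a'+b*c')/(c*a'+d*c')"
      unfolding q1 using False by simp
    show ?thesis using None False e1 q
      by (simp add: mobius_def)
  qed
next
  case (Some x)
  show ?thesis
  proof (cases "c' * x + d' = 0")
    case True
    have "a' * x + b' \<noteq> 0"
    proof
      assume "a' * x + b' = 0"
      then have "b' = - a' * x" "d' = - c' * x" using True by algebra+
      then show False using assms(2) by (simp add: algebra_simps)
    qed
    moreover have "(c * a' + d * c') * x + (c * b' + d * d') = c * (a' * x + b')"
    proof -
      have "(c * a' + d * c') * x + (c * b' + d * d') = c * (a' * x + b') + d * (c' * x + d')" by algebra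
      then show ?thesis using True by simp
    qed
    moreover have "(a * a' + b * c') * x + (a * b' + b * d') = a * (a' * x + b')"
    proof -
      have "(a * a' + b * c') * x + (a * b' + b * d') = a * (a' * x + b') + b * (c' * x + d')" by algebra
      then show ?thesis using True by simp
    qed
    ultimately show ?thesis using Some True by (auto simp: mobius_def)
  next
    case False
    have e1: "((c * a' + d * c') * x + (c * b' + d * d') = 0) = (c * ((a' * x + b') / (c' * x + d')) + d = 0)"
      using False by (simp add: field_simps)
    have q1: "a * ((a' * x + b') / (c' * x + d')) + b = ((a*a'+b*c')*x + (a*b'+b*d'))/(c' * x + d')"
             "c * ((a' * x + b') / (c' * x + d')) + d = ((c*a'+d*c')*x + (c*b'+d*d'))/(c' * x + d')"
      using False by (simp_all add: field_simps)
    have q: "(a * ((a' * x + b') / (c' * x + d')) + b) / (c * ((a' * x + b') / (c' * x + d')) + d)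
       = ((a*a'+b*c')*x + (a*b'+b*d')) / ((c*a'+d*c')*x + (c*b'+d*d'))"
      unfolding q1 using False by simp
    show ?thesis using Some False e1 q
      by (simp add: mobius_def)
  qed
qed

lemma mobius_id: "(D::real) \<noteq> 0 \<Longrightarrow> mobius D 0 0 D p = p"
  by (cases p) (auto simp: mobius_def)

lemma mobius_inv_left:
  "a * d - b * c \<noteq> (0::real) \<Longrightarrow> mobius d (-b) (-c) a (mobius a b c d p) = p"
proof -
  assume h: "a * d - b * c \<noteq> (0::real)"
  have "mobius d (-b) (-c) a (mobius a b c d p) = mobius (d*a+(-b)*c) (d*b+(-b)*d) ((-c)*a+a*c) ((-c)*b+a*d) p"
    by (rule mobius_comp) (use h in \<open>simp_all add: algebra_simps\<close>)
  also have "\<dots> = mobius (a*d-b*c) 0 0 (a*d-b*c) p" by (simp add: algebra_simps)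
  finally show ?thesis using mobius_id[OF h] by simp
qed

lemma mobius_inv_right:
  "a * d - b * c \<noteq> (0::real) \<Longrightarrow> mobius a b c d (mobius d (-b) (-c) a p) = p"
proof -
  assume h: "a * d - b * c \<noteq> (0::real)"
  have "mobius a b c d (mobius d (-b) (-c) a p) = mobius (a*d+b*(-c)) (a*(-b)+b*a) (c*d+d*(-c)) (c*(-b)+d*a) p"
    by (rule mobius_comp) (use h in \<open>simp_all add: algebra_simps\<close>)
  also have "\<dots> = mobius (a*d-b*c) 0 0 (a*d-b*c) p" by (simp add: algebra_simps)
  finally show ?thesis using mobius_id[OF h] by simp
qed

lemma projective_bij: "projective \<phi> \<Longrightarrow> bij \<phi>"
proof -
  assume "projective \<phi>"
  then obtain a b c d where det: "a * d - b * c \<noteq> 0" and phi: "\<phi> = mobius a b c d"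
    unfolding projective_def by blast
  show "bij \<phi>"
    apply (rule o_bij[of "mobius d (-b) (-c) a"])
    using det phi mobius_inv_left mobius_inv_right by (auto simp: fun_eq_iff)
qed

lemma projective_inv: "projective \<phi> \<Longrightarrow> projective (inv \<phi>)"
proof -
  assume "projective \<phi>"
  then obtain a b c d where det: "a * d - b * c \<noteq> 0" and phi: "\<phi> = mobius a b c d"
    unfolding projective_def by blast
  have "inv \<phi> = mobius d (-b) (-c) a"
    apply (rule inv_equality) using det phi mobius_inv_left mobius_inv_right by auto
  moreover have "d * a - (-b) * (-c) \<noteq> 0" using det by (simp add: algebra_simps)
  ultimately show ?thesis unfolding projective_def by blast
qed

lemma chart_inv_mobius: "i \<in> charts \<Longrightarrow> \<exists>a b c d. a * d - b * c \<noteq> (0::real) \<and> (\<forall>t. chart_inv i t = mobius a b c d (Some t))"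
  apply (simp add: charts_def)
  apply (elim disjE)
    apply (rule exI[of _ 1], rule exI[of _ 0], rule exI[of _ 0], rule exI[of _ 1], simp add: chart_inv_def mobius_def)
   apply (rule exI[of _ 0], rule exI[of _ "-1"], rule exI[of _ 1], rule exI[of _ 0], simp add: chart_inv_def mobius_def)
  apply (rule exI[of _ 1], rule exI[of _ "-1"], rule exI[of _ 1], rule exI[of _ 0])
  apply (auto simp: chart_inv_def mobius_def field_simps)
  done

lemma chart_mobius: "j \<in> charts \<Longrightarrow> \<exists>a b c d. a * d - b * c \<noteq> (0::real) \<and>
   (\<forall>p. (p \<in> chart_dom j \<longleftrightarrow> mobius a b c d p \<noteq> None) \<and> (p \<in> chart_dom j \<longrightarrow> chart j p = chart 0 (mobius a b c d p)))"
  apply (simp add: charts_def)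
  apply (elim disjE)
    apply (rule exI[of _ 1], rule exI[of _ 0], rule exI[of _ 0], rule exI[of _ 1])
    apply (simp add: chart_dom_def chart_def mobius_def split: option.splits)
   apply (rule exI[of _ 0], rule exI[of _ "-1"], rule exI[of _ 1], rule exI[of _ 0])
   apply (simp add: chart_dom_def chart_def mobius_def split: option.splits)
  apply (rule exI[of _ 0], rule exI[of _ 1], rule exI[of _ "-1"], rule exI[of _ 1])
  apply (auto simp: chart_dom_def chart_def mobius_def split: option.splits)
  done

lemma projective_local:
  assumes "projective \<phi>" "i \<in> charts" "j \<in> charts"
  shows "\<exists>a b c d. a * d - b * c \<noteq> (0::real) \<and>
    (\<forall>t. (\<phi> (chart_inv i t) \<in> chart_dom j \<longleftrightarrow> c * t + d \<noteq> 0) \<and>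
         (c * t + d \<noteq> 0 \<longrightarrow> chart j (\<phi> (chart_inv i t)) = (a * t + b) / (c * t + d)))"
proof -
  obtain a1 b1 c1 d1 where d1: "a1 * d1 - b1 * c1 \<noteq> (0::real)" and e1: "\<forall>t. chart_inv i t = mobius a1 b1 c1 d1 (Some t)"
    using chart_inv_mobius[OF assms(2)] by blast
  obtain a2 b2 c2 d2 where d2: "a2 * d2 - b2 * c2 \<noteq> (0::real)" and e2: "(\<forall>p. (p \<in> chart_dom j \<longleftrightarrow> mobius a2 b2 c2 d2 p \<noteq> None) \<and> (p \<in> chart_dom j \<longrightarrow> chart j p = chart 0 (mobius a2 b2 c2 d2 p)))"
    using chart_mobius[OF assms(3)] by blast
  obtain a b c d where d: "a * d - b * c \<noteq> (0::real)" and ph: "\<phi> = mobius a b c d"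
    using assms(1) unfolding projective_def by blast
  define A where "A = a*a1+b*c1" define B where "B = a*b1+b*d1"
  define C where "C = c*a1+d*c1" define D where "D = c*b1+d*d1"
  have dd: "A * D - B * C \<noteq> 0"
  proof -
    have "A * D - B * C = (a*d-b*c)*(a1*d1-b1*c1)" unfolding A_def B_def C_def D_def by algebra
    then show ?thesis using d d1 by simp
  qed
  have c1: "\<phi> (chart_inv i t) = mobius A B C D (Some t)" for t
    using mobius_comp[OF d d1] e1 ph A_def B_def C_def D_def by simp
  define A' where "A' = a2*A+b2*C" define B' where "B' = a2*B+b2*D"
  define C' where "C' = c2*A+d2*C" define D' where "D' = c2*B+d2*D"
  have dd': "A' * D' - B' * C' \<noteq> 0"
  proof -
    have "A' * D' - B' * C' = (a2*d2-b2*c2)*(A*D-B*C)" unfolding A'_def B'_def C'_def D'_def by algebra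
    then show ?thesis using d2 dd by simp
  qed
  have c2: "mobius a2 b2 c2 d2 (\<phi> (chart_inv i t)) = mobius A' B' C' D' (Some t)" for t
    using mobius_comp[OF d2 dd] c1 A'_def B'_def C'_def D'_def by simp
  show ?thesis
  proof (intro exI conjI allI impI)
    show "A' * D' - B' * C' \<noteq> 0" by fact
  next
    fix t
    show "(\<phi> (chart_inv i t) \<in> chart_dom j) = (C' * t + D' \<noteq> 0)"
      using e2 c2 by (simp add: mobius_def)
  next
    fix t assume "C' * t + D' \<noteq> 0"
    then have "\<phi> (chart_inv i t) \<in> chart_dom j" using e2 c2 by (simp add: mobius_def)
    then show "chart j (\<phi> (chart_inv i t)) = (A' * t + B') / (C' * t + D')"
      using e2 c2 \<open>C' * t + D' \<noteq> 0\<close> by (simp add: mobius_def chart_def)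
  qed
qed

declare Ck.simps[simp del]

lemma prod_has_derivative:
  fixes r1 r2 :: "real \<Rightarrow> real"
  assumes "(r1 has_derivative D1) (at s)" "(r2 has_derivative D2) (at t)"
  shows "((\<lambda>x. (r1 (fst x), r2 (snd x))) has_derivative (\<lambda>v. (D1 (fst v), D2 (snd v)))) (at (s,t))"
proof -
  have f: "(fst has_derivative fst) (at (s,t))" by (rule has_derivative_fst[OF has_derivative_ident])
  have sn: "(snd has_derivative snd) (at (s,t))" by (rule has_derivative_snd[OF has_derivative_ident])
  have a: "((\<lambda>x. r1 (fst x)) has_derivative (\<lambda>v. D1 (fst v))) (at (s,t))"
    using has_derivative_compose[OF f, of r1 D1] assms(1) by simp
  have b: "((\<lambda>x. r2 (snd x)) has_derivative (\<lambda>v. D2 (snd v))) (at (s,t))"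
    using has_derivative_compose[OF sn, of r2 D2] assms(2) by simp
  show ?thesis using has_derivative_Pair[OF a b] .
qed

lemma Ck1_prod:
  fixes r1 r2 :: "real \<Rightarrow> real"
  assumes c1: "Ck 1 r1 O1" and c2: "Ck 1 r2 O2" and oD: "open D" and sub: "D \<subseteq> O1 \<times> O2"
  shows "Ck 1 (\<lambda>x. (r1 (fst x), r2 (snd x))) D"
proof -
  have hd: "((\<lambda>x. (r1 (fst x), r2 (snd x))) has_derivative
      (\<lambda>v. (frechet_derivative r1 (at (fst x)) (fst v), frechet_derivative r2 (at (snd x)) (snd v)))) (at x)"
    if "x \<in> D" for x
  proof -
    have "fst x \<in> O1" "snd x \<in> O2" using that sub by auto
    then have "r1 differentiable (at (fst x))" "r2 differentiable (at (snd x))" using c1 c2 by (auto simp: Ck.simps)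
    then have d1: "(r1 has_derivative frechet_derivative r1 (at (fst x))) (at (fst x))"
      and d2: "(r2 has_derivative frechet_derivative r2 (at (snd x))) (at (snd x))"
      using frechet_derivative_works by blast+
    have "((\<lambda>x. (r1 (fst x), r2 (snd x))) has_derivative
      (\<lambda>v. (frechet_derivative r1 (at (fst x)) (fst v), frechet_derivative r2 (at (snd x)) (snd v)))) (at (fst x, snd x))"
      by (rule prod_has_derivative[OF d1 d2])
    then show ?thesis by simp
  qed
  show ?thesis
  proof (simp only: One_nat_def Ck.simps, intro conjI ballI allI)
    fix x assume "x \<in> D" then show "(\<lambda>x. (r1 (fst x), r2 (snd x))) differentiable (at x)"
      unfolding differentiable_def using hd by blast
  next
    fix v :: "real \<times> real"
    have e: "frechet_derivative (\<lambda>x. (r1 (fst x), r2 (snd x))) (at x) v =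
      (frechet_derivative r1 (at (fst x)) (fst v), frechet_derivative r2 (at (snd x)) (snd v))" if "x \<in> D" for x
      using fun_cong[OF frechet_derivative_at[OF hd[OF that]], of v] by simp
    have k1: "continuous_on O1 (\<lambda>s. frechet_derivative r1 (at s) (fst v))" using c1 by (simp only: One_nat_def Ck.simps)
    have k2: "continuous_on O2 (\<lambda>s. frechet_derivative r2 (at s) (snd v))" using c2 by (simp only: One_nat_def Ck.simps)
    have "continuous_on D (\<lambda>x. (frechet_derivative r1 (at (fst x)) (fst v), frechet_derivative r2 (at (snd x)) (snd v)))"
    proof (intro continuous_on_Pair)
      have s1: "fst ` D \<subseteq> O1" and s2: "snd ` D \<subseteq> O2" using sub by auto
      show "continuous_on D (\<lambda>x. frechet_derivative r1 (at (fst x)) (fst v))"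
        by (rule continuous_on_compose2[OF k1 continuous_on_fst[OF continuous_on_id] s1])
      show "continuous_on D (\<lambda>x. frechet_derivative r2 (at (snd x)) (snd v))"
        by (rule continuous_on_compose2[OF k2 continuous_on_snd[OF continuous_on_id] s2])
    qed
    then show "continuous_on D (\<lambda>x. frechet_derivative (\<lambda>x. (r1 (fst x), r2 (snd x))) (at x) v)"
      by (rule continuous_on_eq) (use e in simp)
  qed
qed

lemma rat_deriv:
  fixes a b c d t :: real
  assumes "c * t + d \<noteq> 0"
  shows "((\<lambda>t. (a * t + b) / (c * t + d)) has_real_derivative ((a * d - b * c) / (c * t + d)^2)) (at t)"
proof -
  have "((\<lambda>t. (a * t + b) / (c * t + d)) has_real_derivative
     ((a * (c * t + d) - (a * t + b) * c) / (c * t + d)^2)) (at t)"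
    using assms by (auto intro!: derivative_eq_intros simp: power2_eq_square)
  moreover have "(a * (c * t + d) - (a * t + b) * c) = a * d - b * c" by algebra
  ultimately show ?thesis by simp
qed

lemma Ck1_rat:
  fixes a b c d :: real
  shows "Ck 1 (\<lambda>t. (a * t + b) / (c * t + d)) {t. c * t + d \<noteq> 0}"
proof (simp only: One_nat_def Ck.simps, intro conjI ballI allI)
  fix t :: real assume "t \<in> {t. c * t + d \<noteq> 0}"
  then have "c * t + d \<noteq> 0" by simp
  from has_field_derivative_imp_has_derivative[OF rat_deriv[OF this]]
  show "(\<lambda>t. (a * t + b) / (c * t + d)) differentiable (at t)"
    unfolding differentiable_def by blast
next
  fix v :: real
  have e: "frechet_derivative (\<lambda>t. (a * t + b) / (c * t + d)) (at t) v = (a * d - b * c) / (c * t + d)^2 * v"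
    if "t \<in> {t. c * t + d \<noteq> 0}" for t
  proof -
    have "((\<lambda>t. (a * t + b) / (c * t + d)) has_derivative (*) ((a * d - b * c) / (c * t + d)^2)) (at t)"
      using rat_deriv[of c t d a b] that has_field_derivative_imp_has_derivative by auto
    from fun_cong[OF frechet_derivative_at[OF this], of v] show ?thesis by simp
  qed
  have "continuous_on {t. c * t + d \<noteq> 0} (\<lambda>t. (a * d - b * c) / (c * t + d)^2 * v)"
    by (intro continuous_intros) auto
  then show "continuous_on {t. c * t + d \<noteq> 0} (\<lambda>x. frechet_derivative (\<lambda>t. (a * t + b) / (c * t + d)) (at x) v)"
    by (rule continuous_on_eq) (use e in simp)
qed

lemma open_rat_dom: "open {t::real. c * t + d \<noteq> 0}"
proof -
  have "continuous_on UNIV (\<lambda>t::real. c * t + d)" by (intro continuous_intros)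
  then have "open ((\<lambda>t::real. c * t + d) -` (- {0}))" using open_vimage by blast
  then show ?thesis by (simp add: vimage_def)
qed

lemma projective_Ck1: "projective \<phi> \<Longrightarrow> Ck_map_rp1 1 \<phi>"
  unfolding Ck_map_rp1_def
proof (intro ballI)
  fix i j assume p: "projective \<phi>" and i: "i \<in> charts" and j: "j \<in> charts"
  obtain a b c d where det: "a * d - b * c \<noteq> (0::real)" and
    e: "\<forall>t. (\<phi> (chart_inv i t) \<in> chart_dom j \<longleftrightarrow> c * t + d \<noteq> 0) \<and>
         (c * t + d \<noteq> 0 \<longrightarrow> chart j (\<phi> (chart_inv i t)) = (a * t + b) / (c * t + d))"
    using projective_local[OF p i j] by blast
  have s: "{t. \<phi> (chart_inv i t) \<in> chart_dom j} = {t. c * t + d \<noteq> 0}" using e by auto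
  show "open {t. \<phi> (chart_inv i t) \<in> chart_dom j} \<and>
          Ck 1 (\<lambda>t. chart j (\<phi> (chart_inv i t))) {t. \<phi> (chart_inv i t) \<in> chart_dom j}"
  proof -
    have "Ck 1 (\<lambda>t. chart j (\<phi> (chart_inv i t))) {t. c * t + d \<noteq> 0}"
      by (rule Ck_cong[OF open_rat_dom _ Ck1_rat[of a b c d]]) (use e in simp)
    then show ?thesis unfolding s using open_rat_dom by blast
  qed
qed

lemma Ck1_map_A:
  assumes g: "Ck_map_rp1 1 g" and F: "\<forall>(x,y)\<in>annulus. F (x,y) = (g x, g y)"
    and im: "F ` annulus \<subseteq> annulus"
    and op: "\<forall>ij\<in>charts \<times> charts. \<forall>ij'\<in>charts \<times> charts. open (locdom F ij ij')"
  shows "Ck_map_A 1 F"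
  unfolding Ck_map_A_def
proof (intro conjI ballI im)
  fix ij ij' assume ij: "ij \<in> charts \<times> charts" and ij': "ij' \<in> charts \<times> charts"
  obtain i i' where ii: "ij = (i,i')" "i \<in> charts" "i' \<in> charts" using ij by auto
  obtain j j' where jj: "ij' = (j,j')" "j \<in> charts" "j' \<in> charts" using ij' by auto
  define D where "D = locdom F ij ij'"
  have oD: "open D" using op ij ij' D_def by blast
  show "open (locdom F ij ij')" using oD D_def by simp
  define O1 where "O1 = {t. g (chart_inv i t) \<in> chart_dom j}"
  define O2 where "O2 = {t. g (chart_inv i' t) \<in> chart_dom j'}"
  have c1: "Ck 1 (\<lambda>t. chart j (g (chart_inv i t))) O1" using g ii jj unfolding Ck_map_rp1_def O1_def by blast
  have c2: "Ck 1 (\<lambda>t. chart j' (g (chart_inv i' t))) O2" using g ii jj unfolding Ck_map_rp1_def O2_def by blast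
  have pt: "x \<in> O1 \<times> O2 \<and> locexp F ij ij' x = (chart j (g (chart_inv i (fst x))), chart j' (g (chart_inv i' (snd x))))"
    if "x \<in> D" for x
  proof -
    obtain s t where x: "x = (s,t)" by fastforce
    have ann: "(chart_inv i s, chart_inv i' t) \<in> annulus" and dom: "F (chart_inv i s, chart_inv i' t) \<in> chartA_dom (j,j')"
      using that x ii jj by (auto simp: D_def locdom_def chartA_inv_def)
    have "F (chart_inv i s, chart_inv i' t) = (g (chart_inv i s), g (chart_inv i' t))" using F ann by auto
    then show ?thesis using dom x ii jj
      by (simp add: chartA_dom_def O1_def O2_def locexp_def chartA_def chartA_inv_def)
  qed
  have cP: "Ck 1 (\<lambda>x. (chart j (g (chart_inv i (fst x))), chart j' (g (chart_inv i' (snd x))))) D"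
    by (rule Ck1_prod[OF c1 c2 oD]) (use pt in blast)
  show "Ck 1 (locexp F ij ij') (locdom F ij ij')"
    unfolding D_def[symmetric]
  proof (rule Ck_cong[OF oD _ cP])
    fix x assume "x \<in> D"
    from pt[OF this] show "(chart j (g (chart_inv i (fst x))), chart j' (g (chart_inv i' (snd x)))) = locexp F ij ij' x"
      by simp
  qed
qed

lemma open_other_point:
  fixes U :: "real set"
  assumes "open U" "x \<in> U"
  shows "\<exists>e>0. {x - e<..<x + e} \<subseteq> U"
proof -
  obtain e where "e > 0" "ball x e \<subseteq> U" using assms open_contains_ball by blast
  moreover have "{x - e<..<x + e} = ball x e" by (auto simp: dist_real_def abs_less_iff)
  ultimately show ?thesis by auto
qed

lemma algebra_key:
  fixes a u1 u1' u2 K1 K2 :: real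
  assumes a: "a \<noteq> 0" and u1: "u1 \<noteq> 0" and u1': "u1' \<noteq> 0" and u2: "u2 \<noteq> 0" and ne: "u1 \<noteq> u1'"
    and e1: "(u1 - u2)^2 = (u1 - u2 + a * u1 * u2 * (K2 - K1))^2"
    and e2: "(u1' - u2)^2 = (u1' - u2 + a * u1' * u2 * (K2 - K1))^2"
  shows "K1 = K2"
proof (rule ccontr)
  assume "K1 \<noteq> K2"
  then have dk: "K2 - K1 \<noteq> 0" by simp
  have q1: "a * u1 * u2 * (K2 - K1) * (2 * (u1 - u2) + a * u1 * u2 * (K2 - K1)) = 0"
    using e1 by algebra
  have q2: "a * u1' * u2 * (K2 - K1) * (2 * (u1' - u2) + a * u1' * u2 * (K2 - K1)) = 0"
    using e2 by algebra
  have r1: "2 * (u1 - u2) + a * u1 * u2 * (K2 - K1) = 0" using q1 a u1 u2 dk by simp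
  have r2: "2 * (u1' - u2) + a * u1' * u2 * (K2 - K1) = 0" using q2 a u1' u2 dk by simp
  have "(u1 - u1') * (2 + a * u2 * (K2 - K1)) = 0" using r1 r2 by algebra
  then have s: "2 + a * u2 * (K2 - K1) = 0" using ne by simp
  have "u2 = 0" using r1 s by algebra
  then show False using u2 by simp
qed

lemma ode_core:
  fixes f f' :: "real \<Rightarrow> real" and U :: "real set"
  assumes oU: "open U" and yU: "y \<in> U"
    and der: "\<And>x. x \<in> U \<Longrightarrow> (f has_real_derivative f' x) (at x)"
    and inj: "inj_on f U"
    and E: "\<And>x z. x \<in> U \<Longrightarrow> z \<in> U \<Longrightarrow> x \<noteq> z \<Longrightarrow> f' x * f' z * (x - z)^2 = (f x - f z)^2"
  shows "\<exists>\<alpha> \<beta> \<gamma> \<delta>. \<alpha> * \<delta> - \<beta> * \<gamma> \<noteq> 0 \<and> (\<forall>x\<in>U. \<gamma> * x + \<delta> \<noteq> 0 \<and> f x = (\<alpha> * x + \<beta>) / (\<gamma> * x + \<delta>))"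
proof -
  define a where "a = f' y"
  have fne: "f x \<noteq> f y" if "x \<in> U" "x \<noteq> y" for x
    using inj that yU inj_on_def by metis
  have a0: "a \<noteq> 0"
  proof -
    obtain e where e: "e > 0" "{y - e<..<y + e} \<subseteq> U" using open_other_point[OF oU yU] by blast
    define x where "x = y + e / 2"
    have xU: "x \<in> U" "x \<noteq> y" using e x_def by auto
    have "(f x - f y)^2 \<noteq> 0" using fne[OF xU] by simp
    then have "f' x * a * (x - y)^2 \<noteq> 0" using E[OF xU(1) yU xU(2)] a_def by simp
    then show ?thesis by auto
  qed
  define V where "V = U - {y}"
  have oV: "open V" unfolding V_def using oU by (simp add: open_Diff)
  define h where "h x = 1 / (f x - f y) - 1 / (a * (x - y))" for x
  have hder: "(h has_real_derivative 0) (at x)" if xV: "x \<in> V" for x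
  proof -
    have xU: "x \<in> U" "x \<noteq> y" using xV V_def by auto
    have n1: "f x - f y \<noteq> 0" using fne[OF xU] by simp
    have n2: "a * (x - y) \<noteq> 0" using a0 xU by simp
    have d: "(h has_real_derivative (- f' x / (f x - f y)^2 + a / (a * (x - y))^2)) (at x)"
      unfolding h_def[abs_def]
      using der[OF xU(1)] n1 n2
      by (auto intro!: derivative_eq_intros simp: power2_eq_square field_simps)
    have Ex: "f' x * a * (x - y)^2 = (f x - f y)^2" using E[OF xU(1) yU xU(2)] a_def by simp
    have fx0: "f' x \<noteq> 0" using Ex n1 by auto
    have "f' x / (f x - f y)^2 = f' x / (f' x * a * (x - y)^2)" using Ex by simp
    also have "\<dots> = 1 / (a * (x - y)^2)" using fx0 by simp
    finally have t1: "f' x / (f x - f y)^2 = 1 / (a * (x - y)^2)" .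
    have t2: "a / (a * (x - y))^2 = 1 / (a * (x - y)^2)" using a0 by (simp add: power2_eq_square)
    have "- f' x / (f x - f y)^2 + a / (a * (x - y))^2 = 0"
      using t1 t2 by simp
    then show ?thesis using d by simp
  qed
  have P: "(f x - f y) * (1 + a * h x * (x - y)) = a * (x - y) \<and> f' x * (1 + a * h x * (x - y))^2 = a
           \<and> 1 + a * h x * (x - y) \<noteq> 0" if xV: "x \<in> V" for x
  proof -
    have xU: "x \<in> U" "x \<noteq> y" using xV V_def by auto
    have n1: "f x - f y \<noteq> 0" using fne[OF xU] by simp
    have n2: "x - y \<noteq> 0" using xU by simp
    have Ex: "f' x * a * (x - y)^2 = (f x - f y)^2" using E[OF xU(1) yU xU(2)] a_def by simp
    have hh: "1 + a * h x * (x - y) = a * (x - y) / (f x - f y)"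
    proof -
      obtain A B where AB: "A = f x - f y" "B = x - y" by blast
      have "h x = 1 / A - 1 / (a * B)" unfolding h_def AB by simp
      moreover have "1 + a * (1 / A - 1 / (a * B)) * B = a * B / A"
        using n1 n2 a0 AB by (simp add: field_simps)
      ultimately show ?thesis using AB by simp
    qed
    have p1: "(f x - f y) * (1 + a * h x * (x - y)) = a * (x - y)"
      unfolding hh using n1 by simp
    have p3: "1 + a * h x * (x - y) \<noteq> 0"
    proof
      assume "1 + a * h x * (x - y) = 0"
      then have "a * (x - y) = 0" using p1 by simp
      then show False using a0 n2 by simp
    qed
    have "f' x * a * (x - y)^2 * (1 + a * h x * (x - y))^2 = (a * (x - y))^2"
      using Ex p1 by (metis power_mult_distrib)
    then have "a * (x - y)^2 * (f' x * (1 + a * h x * (x - y))^2) = a * (x - y)^2 * a"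
      by (simp add: power2_eq_square algebra_simps)
    then have p2: "f' x * (1 + a * h x * (x - y))^2 = a" using a0 n2 by simp
    show ?thesis using p1 p2 p3 by simp
  qed
  have hconst: "h x1 = h x2" if x1: "x1 \<in> V" and x2: "x2 \<in> V" for x1 x2
  proof (cases "x1 = x2")
    case True then show ?thesis by simp
  next
    case ne: False
    obtain e where e: "e > 0" "{x1 - e<..<x1 + e} \<subseteq> V" using open_other_point[OF oV x1] by blast
    have loc: "h z = h x1" if "z \<in> {x1 - e<..<x1 + e}" for z
    proof (rule DERIV_isconst3[of "x1 - e" "x1 + e" z x1 h])
      show "x1 - e < x1 + e" using e by simp
      show "z \<in> {x1 - e<..<x1 + e}" by fact
      show "x1 \<in> {x1 - e<..<x1 + e}" using e by simp
      fix x assume "x \<in> {x1 - e<..<x1 + e}"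
      then show "(h has_real_derivative 0) (at x)" using hder e by blast
    qed
    define x1' where "x1' = (if x1 + e / 2 = x2 then x1 - e / 2 else x1 + e / 2)"
    have x1'I: "x1' \<in> {x1 - e<..<x1 + e}" using e by (auto simp: x1'_def)
    have x1'V: "x1' \<in> V" using x1'I e by auto
    have x1'ne: "x1' \<noteq> x2" "x1' \<noteq> x1" using e by (auto simp: x1'_def)
    have hx1': "h x1' = h x1" using loc[OF x1'I] .
    have main: "(u - (x2 - y))^2 = (u - (x2 - y) + a * u * (x2 - y) * (h x2 - h x1))^2"
      if zV: "z \<in> V" and zne: "z \<noteq> x2" and hz: "h z = h x1" and u: "u = z - y" for z u
    proof -
      have zU: "z \<in> U" and x2U: "x2 \<in> U" using zV x2 V_def by auto
      obtain d1 where d1: "d1 = 1 + a * h x1 * (z - y)" by blast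
      obtain d2 where d2: "d2 = 1 + a * h x2 * (x2 - y)" by blast
      have Pz: "(f z - f y) * d1 = a * (z - y)" "f' z * d1^2 = a" using P[OF zV] hz d1 by simp_all
      have P2: "(f x2 - f y) * d2 = a * (x2 - y)" "f' x2 * d2^2 = a" using P[OF x2] d2 by simp_all
      have Ez: "f' z * f' x2 * (z - x2)^2 = (f z - f x2)^2" using E[OF zU x2U zne] .
      have "a * a * (z - x2)^2 = (a * (z - y) * d2 - a * (x2 - y) * d1)^2"
      proof -
        have "a * a * (z - x2)^2 = (f' z * d1^2) * (f' x2 * d2^2) * (z - x2)^2" using Pz P2 by simp
        also have "\<dots> = (f' z * f' x2 * (z - x2)^2) * (d1 * d2)^2" by (simp add: algebra_simps power2_eq_square)
        also have "\<dots> = ((f z - f x2) * (d1 * d2))^2" using Ez by (simp add: power_mult_distrib)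
        also have "(f z - f x2) * (d1 * d2) = ((f z - f y) * d1) * d2 - ((f x2 - f y) * d2) * d1" by algebra
        also have "\<dots> = a * (z - y) * d2 - a * (x2 - y) * d1" using Pz P2 by simp
        finally show ?thesis .
      qed
      also have "a * (z - y) * d2 - a * (x2 - y) * d1 = a * (u - (x2 - y) + a * u * (x2 - y) * (h x2 - h x1))"
        using d1 d2 u by algebra
      finally have "a^2 * (z - x2)^2 = a^2 * (u - (x2 - y) + a * u * (x2 - y) * (h x2 - h x1))^2"
        by (simp add: power_mult_distrib power2_eq_square)
      then have "(z - x2)^2 = (u - (x2 - y) + a * u * (x2 - y) * (h x2 - h x1))^2" using a0 by simp
      moreover have "z - x2 = u - (x2 - y)" using u by simp
      ultimately show ?thesis by simp
    qed
    have m1: "(x1 - y - (x2 - y))^2 = (x1 - y - (x2 - y) + a * (x1 - y) * (x2 - y) * (h x2 - h x1))^2"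
      using main[OF x1 ne refl refl] .
    have m2: "(x1' - y - (x2 - y))^2 = (x1' - y - (x2 - y) + a * (x1' - y) * (x2 - y) * (h x2 - h x1))^2"
      using main[OF x1'V x1'ne(1) hx1' refl] .
    show ?thesis
      apply (rule algebra_key[OF a0 _ _ _ _ m1 m2])
      using x1 x2 x1'V x1'ne V_def by auto
  qed
  define K where "K = h (SOME x. x \<in> V)"
  have hK: "h x = K" if "x \<in> V" for x
    unfolding K_def using hconst[OF that] that by (metis someI_ex)
  define \<alpha> where "\<alpha> = f y * a * K + a"
  define \<beta> where "\<beta> = f y * (1 - a * K * y) - a * y"
  define \<gamma> where "\<gamma> = a * K"
  define \<delta> where "\<delta> = 1 - a * K * y"
  have det: "\<alpha> * \<delta> - \<beta> * \<gamma> \<noteq> 0"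
  proof -
    have "\<alpha> * \<delta> - \<beta> * \<gamma> = a" unfolding \<alpha>_def \<beta>_def \<gamma>_def \<delta>_def by (simp add: algebra_simps)
    then show ?thesis using a0 by simp
  qed
  have all: "\<forall>x\<in>U. \<gamma> * x + \<delta> \<noteq> 0 \<and> f x = (\<alpha> * x + \<beta>) / (\<gamma> * x + \<delta>)"
  proof
    fix x assume xU: "x \<in> U"
    show "\<gamma> * x + \<delta> \<noteq> 0 \<and> f x = (\<alpha> * x + \<beta>) / (\<gamma> * x + \<delta>)"
    proof (cases "x = y")
      case True
      have "\<gamma> * x + \<delta> = 1" unfolding \<gamma>_def \<delta>_def True by simp
      moreover have "\<alpha> * x + \<beta> = f y" unfolding \<alpha>_def \<beta>_def True by (simp add: algebra_simps)
      ultimately show ?thesis using True by simp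
    next
      case False
      then have xV: "x \<in> V" using xU V_def by auto
      have p: "(f x - f y) * (1 + a * K * (x - y)) = a * (x - y)" "1 + a * K * (x - y) \<noteq> 0"
        using P[OF xV] hK[OF xV] by auto
      have g: "\<gamma> * x + \<delta> = 1 + a * K * (x - y)" unfolding \<gamma>_def \<delta>_def by (simp add: algebra_simps)
      have "\<alpha> * x + \<beta> = f x * (1 + a * K * (x - y))"
      proof -
        have "\<alpha> * x + \<beta> = f y * (1 + a * K * (x - y)) + a * (x - y)" unfolding \<alpha>_def \<beta>_def by (simp add: algebra_simps)
        also have "\<dots> = f x * (1 + a * K * (x - y))" using p(1) by (simp add: algebra_simps)
        finally show ?thesis .
      qed
      then show ?thesis using g p(2) by simp
    qed
  qed
  show ?thesis using det all by blast
qed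

declare Ck.simps[simp del]

lemma inv_into_annulus:
  assumes b: "bij \<phi>" and e: "\<forall>(x,y)\<in>annulus. \<Phi> (x,y) = (\<phi> x, \<phi> y)"
    and bb: "bij_betw \<Phi> annulus annulus"
  shows "\<forall>(x,y)\<in>annulus. inv_into annulus \<Phi> (x,y) = (inv \<phi> x, inv \<phi> y)"
proof (intro ballI, clarify)
  fix x y assume xy: "(x, y) \<in> annulus"
  have ib: "bij (inv \<phi>)" using b bij_imp_bij_inv by blast
  have pa: "(inv \<phi> x, inv \<phi> y) \<in> annulus"
    using xy ib unfolding annulus_def bij_def inj_def by auto
  have "\<Phi> (inv \<phi> x, inv \<phi> y) = (\<phi> (inv \<phi> x), \<phi> (inv \<phi> y))" using e pa by auto
  then have "\<Phi> (inv \<phi> x, inv \<phi> y) = (x, y)"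
    using surj_f_inv_f[OF bij_is_surj[OF b]] by simp
  moreover have "inj_on \<Phi> annulus" using bb bij_betw_def by blast
  ultimately show "inv_into annulus \<Phi> (x, y) = (inv \<phi> x, inv \<phi> y)"
    using inv_into_f_f pa by metis
qed

lemma fd_pair:
  fixes G :: "real \<times> real \<Rightarrow> real \<times> real" and r :: "real \<Rightarrow> real"
  assumes oD: "open D" and st: "(s,t) \<in> D" and G: "\<And>x. x \<in> D \<Longrightarrow> G x = (r (fst x), r (snd x))"
    and d1: "(r has_real_derivative r1) (at s)" and d2: "(r has_real_derivative r2) (at t)"
  shows "frechet_derivative G (at (s,t)) = (\<lambda>v. (r1 * fst v, r2 * snd v))"
proof -
  have "((\<lambda>x. (r (fst x), r (snd x))) has_derivative (\<lambda>v. ((*) r1 (fst v), (*) r2 (snd v)))) (at (s,t))"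
    by (rule prod_has_derivative[OF has_field_derivative_imp_has_derivative[OF d1]
          has_field_derivative_imp_has_derivative[OF d2]])
  then have "(G has_derivative (\<lambda>v. (r1 * fst v, r2 * snd v))) (at (s,t))"
    by (rule has_derivative_transform_within_open[OF _ oD st]) (use G in simp)
  then show ?thesis using frechet_derivative_at by metis
qed

lemma locexp_diag:
  assumes e: "\<forall>(x,y)\<in>annulus. \<Phi> (x,y) = (\<phi> x, \<phi> y)" and st: "st \<in> locdom \<Phi> (i,i) (j,j)"
  shows "locexp \<Phi> (i,i) (j,j) st = (chart j (\<phi> (chart_inv i (fst st))), chart j (\<phi> (chart_inv i (snd st))))
     \<and> \<phi> (chart_inv i (fst st)) \<in> chart_dom j \<and> \<phi> (chart_inv i (snd st)) \<in> chart_dom j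
     \<and> chart_inv i (fst st) \<noteq> chart_inv i (snd st)"
proof -
  obtain s t where stp: "st = (s,t)" by fastforce
  have ann: "(chart_inv i s, chart_inv i t) \<in> annulus" and dom: "\<Phi> (chart_inv i s, chart_inv i t) \<in> chartA_dom (j,j)"
    using st stp by (auto simp: locdom_def chartA_inv_def)
  have "\<Phi> (chart_inv i s, chart_inv i t) = (\<phi> (chart_inv i s), \<phi> (chart_inv i t))" using e ann by auto
  then show ?thesis using dom ann stp
    by (simp add: chartA_dom_def locexp_def chartA_def chartA_inv_def annulus_def)
qed

lemma g0_rat:
  fixes \<alpha> \<beta> \<gamma> \<delta> s t v1 v2 w1 w2 :: real
  assumes st: "s \<noteq> t" and es: "\<gamma> * s + \<delta> \<noteq> 0" and et: "\<gamma> * t + \<delta> \<noteq> 0" and D: "\<alpha> * \<delta> - \<beta> * \<gamma> \<noteq> 0"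
  shows "g0 ((\<alpha> * s + \<beta>) / (\<gamma> * s + \<delta>), (\<alpha> * t + \<beta>) / (\<gamma> * t + \<delta>))
      ((\<alpha> * \<delta> - \<beta> * \<gamma>) / (\<gamma> * s + \<delta>)^2 * v1, (\<alpha> * \<delta> - \<beta> * \<gamma>) / (\<gamma> * t + \<delta>)^2 * v2)
      ((\<alpha> * \<delta> - \<beta> * \<gamma>) / (\<gamma> * s + \<delta>)^2 * w1, (\<alpha> * \<delta> - \<beta> * \<gamma>) / (\<gamma> * t + \<delta>)^2 * w2)
    = g0 (s,t) (v1,v2) (w1,w2)"
proof -
  obtain A B Dl where AB: "A = \<gamma> * s + \<delta>" "B = \<gamma> * t + \<delta>" "Dl = \<alpha> * \<delta> - \<beta> * \<gamma>" by blast
  have A0: "A \<noteq> 0" and B0: "B \<noteq> 0" and D0: "Dl \<noteq> 0" using AB es et D by auto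
  have num: "(\<alpha> * s + \<beta>) * B - (\<alpha> * t + \<beta>) * A = Dl * (s - t)" unfolding AB by algebra
  have diff: "(\<alpha> * s + \<beta>) / A - (\<alpha> * t + \<beta>) / B = Dl * (s - t) / (A * B)"
    using num A0 B0 by (simp add: field_simps)
  have st0: "s - t \<noteq> 0" using st by simp
  have n1: "Dl / A^2 * v1 * (Dl / B^2 * w2) + Dl / B^2 * v2 * (Dl / A^2 * w1) = (Dl^2 / (A^2 * B^2)) * (v1 * w2 + v2 * w1)"
    by (simp add: power2_eq_square add_divide_distrib algebra_simps)
  have n2: "(Dl * (s - t) / (A * B))^2 = (Dl^2 / (A^2 * B^2)) * (s - t)^2"
    by (simp add: power_divide power_mult_distrib)
  have c0: "Dl^2 / (A^2 * B^2) \<noteq> 0" using A0 B0 D0 by simp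
  have "(Dl / A^2 * v1 * (Dl / B^2 * w2) + Dl / B^2 * v2 * (Dl / A^2 * w1)) / (Dl * (s - t) / (A * B))^2
        = (v1 * w2 + v2 * w1) / (s - t)^2"
    unfolding n1 n2 using c0 by (rule mult_divide_mult_cancel_left)
  then show ?thesis unfolding g0_def using diff AB by simp
qed

lemma cont_eq_at:
  fixes g k :: "real \<Rightarrow> real"
  assumes "isCont g p" "isCont k p" "\<And>t. t \<noteq> p \<Longrightarrow> g t = k t"
  shows "g p = k p"
proof -
  have "(g \<longlongrightarrow> g p) (at p)" using assms(1) isCont_def by blast
  moreover have "(k \<longlongrightarrow> k p) (at p)" using assms(2) isCont_def by blast
  moreover have "eventually (\<lambda>t. g t = k t) (at p)"
    using assms(3) by (auto simp: eventually_at_filter)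
  ultimately have "(k \<longlongrightarrow> g p) (at p)" using tendsto_cong by (metis (mono_tags, lifting))
  then show ?thesis using \<open>(k \<longlongrightarrow> k p) (at p)\<close> tendsto_unique at_neq_bot by blast
qed

lemma proj_imp_iso:
  assumes b: "bij \<phi>" and e: "\<forall>(x,y)\<in>annulus. \<Phi> (x,y) = (\<phi> x, \<phi> y)"
    and d: "Ck_diffeo_A k \<Phi>" and p: "projective \<phi>"
  shows "isometry_A \<Phi>"
proof -
  have bb: "bij_betw \<Phi> annulus annulus" and mA: "Ck_map_A k \<Phi>" and mI: "Ck_map_A k (inv_into annulus \<Phi>)"
    using d unfolding Ck_diffeo_A_def by auto
  have ie: "\<forall>(x,y)\<in>annulus. inv_into annulus \<Phi> (x,y) = (inv \<phi> x, inv \<phi> y)"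
    by (rule inv_into_annulus[OF b e bb])
  have c1: "Ck_map_A 1 \<Phi>"
    by (rule Ck1_map_A[OF projective_Ck1[OF p] e]) (use mA in \<open>auto simp: Ck_map_A_def\<close>)
  have c2: "Ck_map_A 1 (inv_into annulus \<Phi>)"
    by (rule Ck1_map_A[OF projective_Ck1[OF projective_inv[OF p]] ie]) (use mI in \<open>auto simp: Ck_map_A_def\<close>)
  have metric: "g0 (locexp \<Phi> (i, i) (j, j) st)
           (frechet_derivative (locexp \<Phi> (i, i) (j, j)) (at st) v)
           (frechet_derivative (locexp \<Phi> (i, i) (j, j)) (at st) w)
        = g0 st v w"
    if i: "i \<in> charts" and j: "j \<in> charts" and st: "st \<in> locdom \<Phi> (i, i) (j, j)" for i j st v w
  proof -
    obtain \<alpha> \<beta> \<gamma> \<delta> where det: "\<alpha> * \<delta> - \<beta> * \<gamma> \<noteq> (0::real)" and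
      loc: "\<forall>t. (\<phi> (chart_inv i t) \<in> chart_dom j \<longleftrightarrow> \<gamma> * t + \<delta> \<noteq> 0) \<and>
         (\<gamma> * t + \<delta> \<noteq> 0 \<longrightarrow> chart j (\<phi> (chart_inv i t)) = (\<alpha> * t + \<beta>) / (\<gamma> * t + \<delta>))"
      using projective_local[OF p i j] by blast
    define D where "D = locdom \<Phi> (i, i) (j, j)"
    have oD: "open D" using mA i j unfolding Ck_map_A_def D_def by auto
    define R where "R u = (\<alpha> * u + \<beta>) / (\<gamma> * u + \<delta>)" for u
    have onD: "locexp \<Phi> (i, i) (j, j) x = (R (fst x), R (snd x)) \<and> \<gamma> * fst x + \<delta> \<noteq> 0 \<and> \<gamma> * snd x + \<delta> \<noteq> 0
       \<and> fst x \<noteq> snd x" if "x \<in> D" for x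
      using locexp_diag[OF e that[unfolded D_def]] loc R_def by auto
    obtain s t where stp: "st = (s, t)" by fastforce
    have sD: "(s,t) \<in> D" using st stp D_def by simp
    have es: "\<gamma> * s + \<delta> \<noteq> 0" and et: "\<gamma> * t + \<delta> \<noteq> 0" and ne: "s \<noteq> t" and le: "locexp \<Phi> (i, i) (j, j) (s,t) = (R s, R t)"
      using onD[OF sD] by auto
    have fd: "frechet_derivative (locexp \<Phi> (i, i) (j, j)) (at (s,t)) =
       (\<lambda>v. ((\<alpha> * \<delta> - \<beta> * \<gamma>) / (\<gamma> * s + \<delta>)^2 * fst v, (\<alpha> * \<delta> - \<beta> * \<gamma>) / (\<gamma> * t + \<delta>)^2 * snd v))"
      by (rule fd_pair[OF oD sD]) (use onD R_def rat_deriv es et in \<open>auto simp: R_def[abs_def]\<close>)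
    show ?thesis
      unfolding stp fd le R_def
      using g0_rat[OF ne es et det, of "fst v" "snd v" "fst w" "snd w"] by simp
  qed
  show ?thesis
    unfolding isometry_A_def Ck_diffeo_A_def
    using bb c1 c2 metric by blast
qed

lemma iso_imp_proj:
  assumes b: "bij \<phi>" and e: "\<forall>(x,y)\<in>annulus. \<Phi> (x,y) = (\<phi> x, \<phi> y)"
    and iso: "isometry_A \<Phi>"
  shows "projective \<phi>"
proof -
  have mA1: "Ck_map_A 1 \<Phi>" using iso unfolding isometry_A_def Ck_diffeo_A_def by blast
  have cr: "Ck_map_rp1 1 \<phi>" by (rule Ck_map_A_imp_rp1[OF mA1 e])
  have ci0: "chart_inv 0 u = Some u" for u by (simp add: chart_inv_def)
  have injp: "\<phi> x = \<phi> z \<Longrightarrow> x = z" for x z using b unfolding bij_def inj_def by blast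
  define U where "U = {u. \<phi> (Some u) \<noteq> None}"
  define f where "f u = chart 0 (\<phi> (Some u))" for u
  have cd0: "p \<in> chart_dom 0 \<longleftrightarrow> p \<noteq> None" for p by (cases p) (auto simp: chart_dom_def)
  have U_eq: "{t. \<phi> (chart_inv 0 t) \<in> chart_dom 0} = U" by (simp add: ci0 cd0 U_def)
  have f_eq: "(\<lambda>t. chart 0 (\<phi> (chart_inv 0 t))) = f" by (simp add: ci0 f_def[abs_def])
  have zc: "(0::nat) \<in> charts" by (simp add: charts_def)
  have h0: "open {t. \<phi> (chart_inv 0 t) \<in> chart_dom 0} \<and>
      Ck 1 (\<lambda>t. chart 0 (\<phi> (chart_inv 0 t))) {t. \<phi> (chart_inv 0 t) \<in> chart_dom 0}"
    using cr zc unfolding Ck_map_rp1_def by blast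
  have oU: "open U" and cU: "Ck 1 f U"
    using h0 unfolding U_eq f_eq by blast+
  have fS: "\<phi> (Some u) = Some (f u)" if "u \<in> U" for u
    using that by (cases "\<phi> (Some u)") (auto simp: U_def f_def chart_def)
  have der: "(f has_real_derivative deriv f u) (at u)" if "u \<in> U" for u
  proof -
    have "f differentiable (at u)" using cU that by (simp add: Ck.simps)
    then show ?thesis using DERIV_deriv_iff_real_differentiable by blast
  qed
  have inj: "inj_on f U"
  proof (rule inj_onI)
    fix x z assume "x \<in> U" "z \<in> U" "f x = f z"
    then have "\<phi> (Some x) = \<phi> (Some z)" using fS by simp
    then show "x = z" using injp by blast
  qed
  define D where "D = locdom \<Phi> (0, 0) (0, 0)"
  have oD: "open D" using mA1 zc unfolding Ck_map_A_def D_def by auto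
  have onD: "locexp \<Phi> (0, 0) (0, 0) x = (f (fst x), f (snd x))" if "x \<in> D" for x
    using locexp_diag[OF e that[unfolded D_def]] by (simp add: ci0 f_def)
  have E: "deriv f x * deriv f z * (x - z)^2 = (f x - f z)^2"
    if xU: "x \<in> U" and zU: "z \<in> U" and ne: "x \<noteq> z" for x z
  proof -
    have fne: "f x \<noteq> f z" using inj xU zU ne inj_on_def by metis
    have xzD: "(x, z) \<in> D"
    proof -
      have ann: "(Some x, Some z) \<in> annulus" using ne by (simp add: annulus_def)
      have "\<phi> (Some x) \<noteq> \<phi> (Some z)" using ne injp by blast
      then have "\<Phi> (Some x, Some z) \<in> chartA_dom (0,0)"
        using e ann xU zU by (auto simp: chartA_dom_def annulus_def cd0 U_def)
      then show ?thesis using ann by (simp add: D_def locdom_def chartA_inv_def ci0)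
    qed
    have fd: "frechet_derivative (locexp \<Phi> (0, 0) (0, 0)) (at (x, z)) = (\<lambda>v. (deriv f x * fst v, deriv f z * snd v))"
      by (rule fd_pair[OF oD xzD onD der[OF xU] der[OF zU]])
    have "g0 (locexp \<Phi> (0, 0) (0, 0) (x, z))
           (frechet_derivative (locexp \<Phi> (0, 0) (0, 0)) (at (x, z)) (1, 0))
           (frechet_derivative (locexp \<Phi> (0, 0) (0, 0)) (at (x, z)) (0, 1))
        = g0 (x, z) (1, 0) (0, 1)"
      using iso zc xzD unfolding isometry_A_def D_def by blast
    then have "deriv f x * deriv f z / (f x - f z)^2 = 1 / (x - z)^2"
      unfolding fd onD[OF xzD] g0_def by simp
    moreover have "(f x - f z)^2 \<noteq> 0" "(x - z)^2 \<noteq> 0" using fne ne by auto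
    ultimately show ?thesis by (simp add: field_simps)
  qed
  define y :: real where "y = (if \<phi> (Some 0) \<noteq> None then 0 else 1)"
  have yU: "y \<in> U"
  proof (cases "\<phi> (Some 0) = None")
    case True
    have "\<phi> (Some 1) \<noteq> None"
    proof
      assume "\<phi> (Some 1) = None"
      then have "\<phi> (Some 1) = \<phi> (Some 0)" using True by simp
      then have "Some (1::real) = Some 0" by (rule injp)
      then show False by simp
    qed
    then show ?thesis using True by (simp add: y_def U_def)
  qed (simp add: y_def U_def)
  obtain \<alpha> \<beta> \<gamma> \<delta> where det: "\<alpha> * \<delta> - \<beta> * \<gamma> \<noteq> 0"
    and all: "\<forall>x\<in>U. \<gamma> * x + \<delta> \<noteq> 0 \<and> f x = (\<alpha> * x + \<beta>) / (\<gamma> * x + \<delta>)"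
    using ode_core[OF oU yU der inj E] by blast
  define M where "M = mobius \<alpha> \<beta> \<gamma> \<delta>"
  have pM: "projective M" unfolding projective_def M_def using det by blast
  have onU: "\<phi> (Some u) = M (Some u)" if "u \<in> U" for u
    using all that fS[OF that] by (simp add: M_def mobius_def)
  have "\<phi> = M"
  proof (cases "\<exists>p. \<phi> (Some p) = None")
    case False
    then have allU: "u \<in> U" for u by (simp add: U_def)
    have g0: "\<gamma> = 0"
    proof (rule ccontr)
      assume "\<gamma> \<noteq> 0"
      then have "\<gamma> * (- \<delta> / \<gamma>) + \<delta> = 0" by simp
      then show False using all allU by blast
    qed
    obtain q where q: "\<phi> q = None" using b unfolding bij_def surj_def by metis
    then have "q = None" using False by (cases q) blast+
    then have "\<phi> None = None" using q by simp
    moreover have "M None = None" using g0 by (simp add: M_def mobius_def)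
    ultimately show ?thesis using onU allU by (metis option.exhaust ext)
  next
    case True
    then obtain p where p: "\<phi> (Some p) = None" by blast
    have Uc: "u \<in> U" if "u \<noteq> p" for u
    proof -
      have "\<phi> (Some u) \<noteq> None" using p that injp by (metis option.inject)
      then show ?thesis by (simp add: U_def)
    qed
    show ?thesis
    proof (cases "\<gamma> * p + \<delta> = 0")
      case True
      have Mp: "M (Some p) = None" using True by (simp add: M_def mobius_def)
      have "\<phi> None = M None"
      proof -
        obtain z where z: "M z = \<phi> None" using projective_bij[OF pM] unfolding bij_def surj_def by metis
        show ?thesis
        proof (cases z)
          case None then show ?thesis using z by simp
        next
          case (Some u)
          show ?thesis
          proof (cases "u = p")
            case True
            then have "\<phi> None = \<phi> (Some p)" using z Some Mp p by simp
            then show ?thesis using injp by blast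
          next
            case False
            then have "\<phi> (Some u) = \<phi> None" using onU[OF Uc[OF False]] z Some by simp
            then show ?thesis using injp by blast
          qed
        qed
      qed
      moreover have "\<phi> (Some u) = M (Some u)" for u
        using onU Uc p Mp by (cases "u = p") auto
      ultimately show ?thesis by (metis option.exhaust ext)
    next
      case False
      define R where "R t = (\<alpha> * t + \<beta>) / (\<gamma> * t + \<delta>)" for t
      have cR: "isCont R p" unfolding R_def using False by (intro continuous_intros) auto
      have RS: "\<phi> (Some t) = Some (R t)" if "t \<noteq> p" for t
        using onU[OF Uc[OF that]] all Uc[OF that] by (simp add: M_def mobius_def R_def)
      have contg: "isCont (\<lambda>t. chart j (\<phi> (Some t))) p" if j: "j \<in> {1,2}" for j
      proof -
        have jc: "j \<in> charts" using j by (auto simp: charts_def)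
        have oj: "open {t. \<phi> (chart_inv 0 t) \<in> chart_dom j}" and
          cj: "Ck 1 (\<lambda>t. chart j (\<phi> (chart_inv 0 t))) {t. \<phi> (chart_inv 0 t) \<in> chart_dom j}"
          using cr zc jc unfolding Ck_map_rp1_def by blast+
        have pj: "p \<in> {t. \<phi> (chart_inv 0 t) \<in> chart_dom j}" using p j by (auto simp: ci0 chart_dom_def)
        have "continuous_on {t. \<phi> (chart_inv 0 t) \<in> chart_dom j} (\<lambda>t. chart j (\<phi> (chart_inv 0 t)))"
          by (rule Ck_imp_cont[OF cj])
        then have "isCont (\<lambda>t. chart j (\<phi> (chart_inv 0 t))) p"
          using oj pj continuous_on_eq_continuous_at by blast
        then show ?thesis by (simp add: ci0)
      qed
      show ?thesis
      proof (cases "R p = 0")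
        case False
        have "isCont (\<lambda>t. - 1 / R t) p" using cR False by (intro continuous_intros) auto
        moreover have "chart 1 (\<phi> (Some t)) = - 1 / R t" if "t \<noteq> p" for t
          using RS[OF that] by (simp add: chart_def)
        ultimately have "chart 1 (\<phi> (Some p)) = - 1 / R p"
          using cont_eq_at[OF contg[of 1]] by simp
        then show ?thesis using p False by (simp add: chart_def)
      next
        case True
        have "isCont (\<lambda>t. 1 / (1 - R t)) p" using cR True by (intro continuous_intros) auto
        moreover have "chart 2 (\<phi> (Some t)) = 1 / (1 - R t)" if "t \<noteq> p" for t
          using RS[OF that] by (simp add: chart_def)
        ultimately have "chart 2 (\<phi> (Some p)) = 1 / (1 - R p)"
          using cont_eq_at[OF contg[of 2]] by simp
        then show ?thesis using p True by (simp add: chart_def)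
      qed
    qed
  qed
  then show ?thesis using pM by simp
qed

theorem mainTheorem12:
  fixes k :: nat and \<Phi> :: "rp1 \<times> rp1 \<Rightarrow> rp1 \<times> rp1"
  assumes "Ck_split_map k \<Phi>"
  shows "\<exists>\<phi>. Ck_diffeo_rp1 k \<phi> \<and> (\<forall>(x, y)\<in>annulus. \<Phi> (x, y) = (\<phi> x, \<phi> y)) \<and>
             (isometry_A \<Phi> \<longleftrightarrow> projective \<phi>)"
proof -
  have sm: "split_map \<Phi>" and d: "Ck_diffeo_A k \<Phi>" using assms unfolding Ck_split_map_def by auto
  obtain \<phi> where b: "bij \<phi>" and e: "\<forall>(x,y)\<in>annulus. \<Phi> (x,y) = (\<phi> x, \<phi> y)"
    using split_structure[OF sm] by blast
  have bb: "bij_betw \<Phi> annulus annulus" and mA: "Ck_map_A k \<Phi>" and mI: "Ck_map_A k (inv_into annulus \<Phi>)"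
    using d unfolding Ck_diffeo_A_def by auto
  have ie: "\<forall>(x,y)\<in>annulus. inv_into annulus \<Phi> (x,y) = (inv \<phi> x, inv \<phi> y)"
    by (rule inv_into_annulus[OF b e bb])
  have "Ck_diffeo_rp1 k \<phi>"
    unfolding Ck_diffeo_rp1_def
    using b Ck_map_A_imp_rp1[OF mA e] Ck_map_A_imp_rp1[OF mI ie] by blast
  moreover have "isometry_A \<Phi> \<longleftrightarrow> projective \<phi>"
    using proj_imp_iso[OF b e d] iso_imp_proj[OF b e] by blast
  ultimately show ?thesis using e by blast
qed

end
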